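(* For all $1\le i\le\ell$, $$\Delta(X_i)=X_i\otimes N_{i,i-1}+\hat K^{-1}\otimes X_i+q^{-\frac12}(q-q^{-1})\sum_{j=i}^{\ell-1}X_{j+1}\otimes N_{i,j}M_{i,j}^*.$$
   Context: $0<q<1$, $\ell\ge1$. $U_q(\mathfrak{su}(\ell+1))$: Hopf $*$-algebra generated by $K_i^{\pm1},E_i,F_i=E_i^*$, $K_i^*=K_i$ ($1\le i\le\ell$) with the standard Drinfeld–Jimbo relations ($K_iE_iK_i^{-1}=qE_i$, $K_iE_jK_i^{-1}=q^{-1/2}E_j$ for $|i-j|=1$, $=E_j$ for $|i-j|>1$, $[E_i,F_j]=\delta_{ij}\frac{K_i^2-K_i^{-2}}{q-q^{-1}}$, quantum Serre), $\Delta(K_i)=K_i\otimes K_i$, $\Delta(E_i)=E_i\otimes K_i+K_i^{-1}\otimes E_i$, enlarged by the grouplike element $\hat K=(K_1K_2^2\cdots K_\ell^\ell)^{2/(\ell+1)}$. $[a,b]_q=ab-q^{-1}ba$, $M_{ii}=E_i$, $M_{jk}=[E_j,M_{j+1,k}]_q$ ($j<k$), $N_{jk}=(K_j\cdots K_\ell)(K_{k+1}\cdots K_\ell)\hat K^{-1}$, $X_i=N_{i\ell}M_{i\ell}^*$. *)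

theory Defs
  imports Complex_Main
begin

definition qbr :: "real \<Rightarrow> 'a::real_algebra_1 \<Rightarrow> 'a \<Rightarrow> 'a" where
  "qbr q a b = a * b - scaleR (inverse q) (b * a)"

text \<open>Mrec q E j d = M_{j,j+d}; M_{jj} = E_j, M_{jk} = [E_j, M_{j+1,k}]_q.\<close>
fun Mrec :: "real \<Rightarrow> (nat \<Rightarrow> 'a::real_algebra_1) \<Rightarrow> nat \<Rightarrow> nat \<Rightarrow> 'a" where
  "Mrec q E j 0 = E j"
| "Mrec q E j (Suc d) = qbr q (E j) (Mrec q E (Suc j) d)"

definition Mel :: "real \<Rightarrow> (nat \<Rightarrow> 'a::real_algebra_1) \<Rightarrow> nat \<Rightarrow> nat \<Rightarrow> 'a" where
  "Mel q E j k = Mrec q E j (k - j)"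

definition Kprod :: "(nat \<Rightarrow> 'a::real_algebra_1) \<Rightarrow> nat \<Rightarrow> nat \<Rightarrow> 'a" where
  "Kprod K a l = prod_list (map K [a..<Suc l])"

definition Nel :: "nat \<Rightarrow> (nat \<Rightarrow> 'a::real_algebra_1) \<Rightarrow> 'a \<Rightarrow> nat \<Rightarrow> nat \<Rightarrow> 'a" where
  "Nel l K Khi j k = Kprod K j l * Kprod K (Suc k) l * Khi"

definition Xel :: "nat \<Rightarrow> real \<Rightarrow> (nat \<Rightarrow> 'a::real_algebra_1) \<Rightarrow> (nat \<Rightarrow> 'a) \<Rightarrow> 'a
                   \<Rightarrow> ('a \<Rightarrow> 'a) \<Rightarrow> nat \<Rightarrow> 'a" where
  "Xel l q K E Khi st i = Nel l K Khi i l * st (Mel q E i l)"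

definition star_inv :: "('a::real_algebra_1 \<Rightarrow> 'a) \<Rightarrow> bool" where
  "star_inv st \<longleftrightarrow> (\<forall>a. st (st a) = a) \<and> (\<forall>a b. st (a + b) = st a + st b)
     \<and> (\<forall>r a. st (scaleR r a) = scaleR r (st a)) \<and> (\<forall>a b. st (a * b) = st b * st a)
     \<and> st 1 = 1"

text \<open>The data: elements K_i, K_i^{-1}, E_i (1 \<le> i \<le> l), Khat, Khat^{-1} of a real
  *-algebra A satisfying the defining relations of U_q(su(l+1)) enlarged by Khat;
  a "tensor square" T of A given by a multiplicative bilinear map tens
  (with the involution stT, (a \<otimes> b)^* = a^* \<otimes> b^*); and a unital
  *-algebra homomorphism Dl : A \<rightarrow> T taking the prescribed values on generators.\<close>
definition uq_data ::
  "nat \<Rightarrow> real \<Rightarrow> (nat \<Rightarrow> 'a::real_algebra_1) \<Rightarrow> (nat \<Rightarrow> 'a) \<Rightarrow> (nat \<Rightarrow> 'a) \<Rightarrow> 'a \<Rightarrow> 'a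
   \<Rightarrow> ('a \<Rightarrow> 'a) \<Rightarrow> ('a \<Rightarrow> 'a \<Rightarrow> 't::real_algebra_1) \<Rightarrow> ('t \<Rightarrow> 't) \<Rightarrow> ('a \<Rightarrow> 't) \<Rightarrow> bool" where
  "uq_data l q K Ki E Kh Khi st tens stT Dl \<longleftrightarrow>
     \<comment> \<open>*-structures\<close>
     star_inv st \<and> star_inv stT
   \<and> (\<forall>i\<in>{1..l}. st (K i) = K i) \<and> st Kh = Kh
     \<comment> \<open>invertibility and commutation of Cartan part\<close>
   \<and> (\<forall>i\<in>{1..l}. K i * Ki i = 1 \<and> Ki i * K i = 1)
   \<and> Kh * Khi = 1 \<and> Khi * Kh = 1
   \<and> (\<forall>i\<in>{1..l}. \<forall>j\<in>{1..l}. K i * K j = K j * K i)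
   \<and> (\<forall>i\<in>{1..l}. Kh * K i = K i * Kh)
     \<comment> \<open>K_i E_j K_i^{-1}\<close>
   \<and> (\<forall>i\<in>{1..l}. \<forall>j\<in>{1..l}.
        K i * E j * Ki i =
          (if i = j then scaleR q (E j)
           else if i = j + 1 \<or> j = i + 1 then scaleR (q powr (-1/2)) (E j)
           else E j))
     \<comment> \<open>[E_i, F_j] with F_j = E_j^*\<close>
   \<and> (\<forall>i\<in>{1..l}. \<forall>j\<in>{1..l}.
        E i * st (E j) - st (E j) * E i =
          (if i = j then scaleR (1 / (q - inverse q)) (K i * K i - Ki i * Ki i) else 0))
     \<comment> \<open>quantum Serre relations\<close>
   \<and> (\<forall>i\<in>{1..l}. \<forall>j\<in>{1..l}.
        (i = j + 1 \<or> j = i + 1) \<longrightarrow>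
          E i * E i * E j - scaleR (q + inverse q) (E i * E j * E i) + E j * E i * E i = 0)
   \<and> (\<forall>i\<in>{1..l}. \<forall>j\<in>{1..l}. (i + 1 < j \<or> j + 1 < i) \<longrightarrow> E i * E j = E j * E i)
     \<comment> \<open>Khat = (K_1 K_2^2 ... K_l^l)^{2/(l+1)}, encoded by its relations\<close>
   \<and> Kh ^ (l + 1) = (\<Prod>i\<leftarrow>[1..<Suc l]. K i ^ i) ^ 2
   \<and> (\<forall>j\<in>{1..l}. Kh * E j * Khi = (if j = l then scaleR q (E j) else E j))
     \<comment> \<open>tensor square\<close>
   \<and> (\<forall>a b c. tens (a + b) c = tens a c + tens b c)
   \<and> (\<forall>a b c. tens a (b + c) = tens a b + tens a c)
   \<and> (\<forall>r a b. tens (scaleR r a) b = scaleR r (tens a b))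
   \<and> (\<forall>r a b. tens a (scaleR r b) = scaleR r (tens a b))
   \<and> (\<forall>a b c d. tens a b * tens c d = tens (a * c) (b * d))
   \<and> tens 1 1 = 1
   \<and> (\<forall>a b. stT (tens a b) = tens (st a) (st b))
     \<comment> \<open>coproduct: unital *-algebra homomorphism\<close>
   \<and> (\<forall>a b. Dl (a + b) = Dl a + Dl b)
   \<and> (\<forall>r a. Dl (scaleR r a) = scaleR r (Dl a))
   \<and> (\<forall>a b. Dl (a * b) = Dl a * Dl b)
   \<and> Dl 1 = 1
   \<and> (\<forall>a. Dl (st a) = stT (Dl a))
   \<and> (\<forall>i\<in>{1..l}. Dl (K i) = tens (K i) (K i) \<and> Dl (Ki i) = tens (Ki i) (Ki i))
   \<and> (\<forall>i\<in>{1..l}. Dl (E i) = tens (E i) (K i) + tens (Ki i) (E i))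
   \<and> Dl Kh = tens Kh Kh \<and> Dl Khi = tens Khi Khi"

end

theory Submission
  imports Defs
begin

lemma plist_comm_left:
  fixes f :: "nat \<Rightarrow> 'a::real_algebra_1"
  assumes "\<forall>m\<in>set xs. x * f m = scaleR (c m) (f m * x)"
  shows "x * prod_list (map f xs) = scaleR (prod_list (map c xs)) (prod_list (map f xs) * x)"
  using assms
proof (induction xs)
  case Nil then show ?case by simp
next
  case (Cons a xs)
  have "x * prod_list (map f (a # xs)) = (x * f a) * prod_list (map f xs)" by (simp add: mult.assoc)
  also have "\<dots> = scaleR (c a) (f a * (x * prod_list (map f xs)))"
    using Cons.prems by (simp add: mult.assoc)
  also have "\<dots> = scaleR (c a * prod_list (map c xs)) (f a * prod_list (map f xs) * x)"
    using Cons by (simp add: mult.assoc)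
  finally show ?case by simp
qed

lemma plist_comm_right:
  fixes f :: "nat \<Rightarrow> 'a::real_algebra_1"
  assumes "\<forall>m\<in>set xs. f m * x = scaleR (c m) (x * f m)"
  shows "prod_list (map f xs) * x = scaleR (prod_list (map c xs)) (x * prod_list (map f xs))"
  using assms
proof (induction xs)
  case Nil then show ?case by simp
next
  case (Cons a xs)
  have "prod_list (map f (a # xs)) * x = f a * (prod_list (map f xs) * x)" by (simp add: mult.assoc)
  also have "\<dots> = scaleR (prod_list (map c xs)) ((f a * x) * prod_list (map f xs))"
  proof -
    have "prod_list (map f xs) * x = prod_list (map c xs) *\<^sub>R (x * prod_list (map f xs))"
      using Cons.IH Cons.prems by simp
    then show ?thesis by (simp add: mult.assoc)
  qed
  also have "\<dots> = scaleR (c a * prod_list (map c xs)) (x * (f a * prod_list (map f xs)))"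
  proof -
    have "f a * x = c a *\<^sub>R (x * f a)"
      using Cons.prems by simp
    then show ?thesis by (simp add: mult.assoc[symmetric])
  qed
  finally show ?case by simp
qed

lemma plist_set: "prod_list (map (c::nat\<Rightarrow>real) [a..<Suc b]) = prod c {a..b}"
proof -
  have "set [a..<Suc b] = {a..b}" by auto
  then show ?thesis by (metis distinct_upt prod.distinct_set_conv_list)
qed

lemma Kprod_comm_left:
  assumes "\<forall>m\<in>{a..b}. x * f m = scaleR (c m) (f m * x)"
  shows "x * Kprod f a b = scaleR (prod c {a..b}) (Kprod f a b * x)"
  unfolding Kprod_def plist_set[symmetric]
  by (rule plist_comm_left) (use assms in auto)

lemma Kprod_comm_right:
  assumes "\<forall>m\<in>{a..b}. f m * x = scaleR (c m) (x * f m)"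
  shows "Kprod f a b * x = scaleR (prod c {a..b}) (x * Kprod f a b)"
  unfolding Kprod_def plist_set[symmetric]
  by (rule plist_comm_right) (use assms in auto)

lemma Kprod_cons: "a \<le> b \<Longrightarrow> Kprod f a b = f a * Kprod f (Suc a) b"
  unfolding Kprod_def by (simp add: upt_rec)

lemma Kprod_empty: "b < a \<Longrightarrow> Kprod f a b = 1"
  unfolding Kprod_def by simp

lemma Kprod_single: "Kprod f a a = f a"
  unfolding Kprod_def by simp

lemma Kprod_split: "a \<le> Suc m \<Longrightarrow> m \<le> b \<Longrightarrow> Kprod f a b = Kprod f a m * Kprod f (Suc m) b"
  unfolding Kprod_def
proof -
  assume "a \<le> Suc m" "m \<le> b"
  then have "[a..<Suc b] = [a..<Suc m] @ [Suc m..<Suc b]"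
    by (metis Suc_le_mono upt_add_eq_append le_add_diff_inverse)
  then show "prod_list (map f [a..<Suc b]) = prod_list (map f [a..<Suc m]) * prod_list (map f [Suc m..<Suc b])"
    by simp
qed

lemma Mel_same: "Mel q E j j = E j" unfolding Mel_def by simp

lemma Mel_rec: "j < k \<Longrightarrow> Mel q E j k = qbr q (E j) (Mel q E (Suc j) k)"
  unfolding Mel_def by (subgoal_tac "k - j = Suc (k - Suc j)") auto

lemma Mel_comm_left:
  fixes E :: "nat \<Rightarrow> 'a::real_algebra_1"
  assumes "\<forall>m\<in>{j..k}. x * E m = scaleR (c m) (E m * x)" "j \<le> k"
  shows "x * Mel q E j k = scaleR (prod c {j..k}) (Mel q E j k * x)"
  using assms
proof (induction "k - j" arbitrary: j)
  case 0
  then have "j = k" by simp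
  then show ?case using 0 by (simp add: Mel_same)
next
  case (Suc d)
  then have jk: "j < k" by simp
  have IH: "x * Mel q E (Suc j) k = scaleR (prod c {Suc j..k}) (Mel q E (Suc j) k * x)"
    using Suc by auto
  have xe: "x * E j = scaleR (c j) (E j * x)" using Suc jk by auto
  have pr: "prod c {j..k} = c j * prod c {Suc j..k}" using jk prod.atLeast_Suc_atMost[of j k c] by simp
  define M where "M = Mel q E (Suc j) k"
  have 1: "x * (E j * M) = scaleR (c j * prod c {Suc j..k}) (E j * M * x)"
    by (simp add: mult.assoc[symmetric] xe) (simp add: mult.assoc IH[folded M_def])
  have 2: "x * (M * E j) = scaleR (c j * prod c {Suc j..k}) (M * E j * x)"
    by (simp add: mult.assoc[symmetric] IH[folded M_def]) (simp add: mult.assoc xe)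
  show ?case unfolding Mel_rec[OF jk] qbr_def pr M_def[symmetric]
    by (simp add: right_diff_distrib left_diff_distrib 1 2 scaleR_right_diff_distrib)
qed


locale uqd =
  fixes l :: nat and q :: real
    and K Ki E :: "nat \<Rightarrow> 'a::real_algebra_1" and Kh Khi :: 'a and st :: "'a \<Rightarrow> 'a"
    and tens :: "'a \<Rightarrow> 'a \<Rightarrow> 't::real_algebra_1" and stT :: "'t \<Rightarrow> 't" and Dl :: "'a \<Rightarrow> 't"
  assumes q0: "0 < q" and D: "uq_data l q K Ki E Kh Khi st tens stT Dl"
begin

lemmas DD = D[unfolded uq_data_def star_inv_def]

lemma st_st_all: "\<forall>a. st (st a) = a"
  using DD by (elim conjE) assumption
lemmas st_st = st_st_all[rule_format]

lemma st_add_all: "\<forall>a b. st (a + b) = st a + st b"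
  using DD by (elim conjE) assumption
lemmas st_add = st_add_all[rule_format]

lemma st_scale_all: "\<forall>r a. st (scaleR r a) = scaleR r (st a)"
  using DD by (elim conjE) assumption
lemmas st_scale = st_scale_all[rule_format]

lemma st_mult_all: "\<forall>a b. st (a * b) = st b * st a"
  using DD by (elim conjE) assumption
lemmas st_mult = st_mult_all[rule_format]

lemma st_one_all: "st 1 = 1"
  using DD by (elim conjE) assumption
lemmas st_one = st_one_all[rule_format]

lemma stT_add_all: "\<forall>a b. stT (a + b) = stT a + stT b"
  using DD by (elim conjE) assumption
lemmas stT_add = stT_add_all[rule_format]

lemma stT_scale_all: "\<forall>r a. stT (scaleR r a) = scaleR r (stT a)"
  using DD by (elim conjE) assumption
lemmas stT_scale = stT_scale_all[rule_format]

lemma stK_all: "\<forall>i\<in>{1..l}. st (K i) = K i"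
  using DD by (elim conjE) assumption
lemmas stK = stK_all[rule_format]

lemma KKi0_all: "\<forall>i\<in>{1..l}. K i * Ki i = 1 \<and> Ki i * K i = 1"
  using DD by (elim conjE) assumption
lemmas KKi0 = KKi0_all[rule_format]

lemma KhKhi_all: "Kh * Khi = 1"
  using DD by (elim conjE) assumption
lemmas KhKhi = KhKhi_all[rule_format]

lemma KhiKh_all: "Khi * Kh = 1"
  using DD by (elim conjE) assumption
lemmas KhiKh = KhiKh_all[rule_format]

lemma KK_all: "\<forall>i\<in>{1..l}. \<forall>j\<in>{1..l}. K i * K j = K j * K i"
  using DD by (elim conjE) assumption
lemmas KK = KK_all[rule_format]

lemma KhK_all: "\<forall>i\<in>{1..l}. Kh * K i = K i * Kh"
  using DD by (elim conjE) assumption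
lemmas KhK = KhK_all[rule_format]

lemma KEK_all: "\<forall>i\<in>{1..l}. \<forall>j\<in>{1..l}. K i * E j * Ki i =
          (if i = j then scaleR q (E j)
           else if i = j + 1 \<or> j = i + 1 then scaleR (q powr (-1/2)) (E j)
           else E j)"
  using DD by (elim conjE) assumption
lemmas KEK = KEK_all[rule_format]

lemma EEfar_all: "\<forall>i\<in>{1..l}. \<forall>j\<in>{1..l}. (i + 1 < j \<or> j + 1 < i) \<longrightarrow> E i * E j = E j * E i"
  using DD by (elim conjE) assumption
lemmas EEfar = EEfar_all[rule_format]

lemma tens_add1_all: "\<forall>a b c. tens (a + b) c = tens a c + tens b c"
  using DD by (elim conjE) assumption
lemmas tens_add1 = tens_add1_all[rule_format]

lemma tens_add2_all: "\<forall>a b c. tens a (b + c) = tens a b + tens a c"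
  using DD by (elim conjE) assumption
lemmas tens_add2 = tens_add2_all[rule_format]

lemma tens_scale1_all: "\<forall>r a b. tens (scaleR r a) b = scaleR r (tens a b)"
  using DD by (elim conjE) assumption
lemmas tens_scale1 = tens_scale1_all[rule_format]

lemma tens_scale2_all: "\<forall>r a b. tens a (scaleR r b) = scaleR r (tens a b)"
  using DD by (elim conjE) assumption
lemmas tens_scale2 = tens_scale2_all[rule_format]

lemma tens_mult_all: "\<forall>a b c d. tens a b * tens c d = tens (a * c) (b * d)"
  using DD by (elim conjE) assumption
lemmas tens_mult = tens_mult_all[rule_format]

lemma tens_one_all: "tens 1 1 = 1"
  using DD by (elim conjE) assumption
lemmas tens_one = tens_one_all[rule_format]

lemma stT_tens_all: "\<forall>a b. stT (tens a b) = tens (st a) (st b)"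
  using DD by (elim conjE) assumption
lemmas stT_tens = stT_tens_all[rule_format]

lemma Dl_add_all: "\<forall>a b. Dl (a + b) = Dl a + Dl b"
  using DD by (elim conjE) assumption
lemmas Dl_add = Dl_add_all[rule_format]

lemma Dl_scale_all: "\<forall>r a. Dl (scaleR r a) = scaleR r (Dl a)"
  using DD by (elim conjE) assumption
lemmas Dl_scale = Dl_scale_all[rule_format]

lemma Dl_mult_all: "\<forall>a b. Dl (a * b) = Dl a * Dl b"
  using DD by (elim conjE) assumption
lemmas Dl_mult = Dl_mult_all[rule_format]

lemma Dl_one_all: "Dl 1 = 1"
  using DD by (elim conjE) assumption
lemmas Dl_one = Dl_one_all[rule_format]

lemma Dl_st_all: "\<forall>a. Dl (st a) = stT (Dl a)"
  using DD by (elim conjE) assumption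
lemmas Dl_st = Dl_st_all[rule_format]

lemma Dl_KKi_all: "\<forall>i\<in>{1..l}. Dl (K i) = tens (K i) (K i) \<and> Dl (Ki i) = tens (Ki i) (Ki i)"
  using DD by (elim conjE) assumption
lemmas Dl_KKi = Dl_KKi_all[rule_format]

lemma Dl_E_all: "\<forall>i\<in>{1..l}. Dl (E i) = tens (E i) (K i) + tens (Ki i) (E i)"
  using DD by (elim conjE) assumption
lemmas Dl_E = Dl_E_all[rule_format]

lemma Dl_Khi_all: "Dl Khi = tens Khi Khi"
  using DD by (elim conjE) assumption
lemmas Dl_Khi = Dl_Khi_all

lemmas KKi = KKi0[THEN conjunct1] and KiK = KKi0[THEN conjunct2]
lemmas Dl_K = Dl_KKi[THEN conjunct1] and Dl_Ki = Dl_KKi[THEN conjunct2]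

end

lemma comm_inv: fixes a a' b :: "'a::monoid_mult"
  assumes "a * a' = 1" "a' * a = 1" "a * b = b * a" shows "a' * b = b * a'"
proof -
  have "a' * b = a' * b * (a * a')" using assms by simp
  also have "\<dots> = a' * (b * a) * a'" by (simp add: mult.assoc)
  also have "\<dots> = a' * a * b * a'" using assms(3) by (simp add: mult.assoc)
  finally show ?thesis using assms by simp
qed

context uqd begin

definition "s = q powr (-1/2)"
definition "cf a b = (if a = b then q else if a = b+1 \<or> b = a+1 then s else 1)"

lemma s_pos: "0 < s" unfolding s_def using q0 by simp

lemma ss: "s * s = inverse q"
proof -
  have "s = inverse (sqrt q)" unfolding s_def using q0
    by (simp add: powr_minus powr_half_sqrt less_imp_le)
  moreover have "sqrt q * sqrt q = q" using q0 by simp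
  ultimately show ?thesis by (metis inverse_mult_distrib)
qed

lemma cf_pos: "0 < cf a b" unfolding cf_def using q0 s_pos by auto

lemma cf_sym: "cf a b = cf b a" unfolding cf_def by auto

lemma KE: assumes "a \<in> {1..l}" "b \<in> {1..l}" shows "K a * E b = cf a b *\<^sub>R (E b * K a)"
proof -
  have 1: "K a * E b * Ki a = cf a b *\<^sub>R E b" using KEK[OF assms] by (simp add: cf_def s_def)
  have "K a * E b = K a * E b * (Ki a * K a)" using KiK[OF assms(1)] by simp
  also have "\<dots> = (K a * E b * Ki a) * K a" by (simp add: mult.assoc)
  finally show ?thesis using 1 by simp
qed

lemma KiE: assumes "a \<in> {1..l}" "b \<in> {1..l}" shows "Ki a * E b = inverse (cf a b) *\<^sub>R (E b * Ki a)"
proof -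
  have "E b * Ki a = Ki a * (K a * E b) * Ki a" using KiK[OF assms(1)] KKi[OF assms(1)]
    by (simp add: mult.assoc[symmetric])
  also have "\<dots> = cf a b *\<^sub>R (Ki a * E b)" using KE[OF assms] KKi[OF assms(1)]
    by (simp add: mult.assoc)
  finally have "E b * Ki a = cf a b *\<^sub>R (Ki a * E b)" .
  then show ?thesis using cf_pos[of a b] by simp
qed

lemma KiKc: "a \<in> {1..l} \<Longrightarrow> b \<in> {1..l} \<Longrightarrow> Ki a * K b = K b * Ki a"
  by (rule comm_inv[OF KKi KiK KK])

lemma KiKi: "a \<in> {1..l} \<Longrightarrow> b \<in> {1..l} \<Longrightarrow> Ki a * Ki b = Ki b * Ki a"
  by (rule comm_inv[OF KKi KiK], assumption, assumption) (metis KiKc)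

lemma KhiK: "a \<in> {1..l} \<Longrightarrow> Khi * K a = K a * Khi"
  by (rule comm_inv[OF KhKhi KhiKh KhK])

lemma KhiKi: assumes "a \<in> {1..l}" shows "Khi * Ki a = Ki a * Khi"
proof -
  have "Ki a * Khi = Khi * Ki a"
    by (rule comm_inv[OF KKi[OF assms] KiK[OF assms]]) (simp add: KhiK[OF assms])
  then show ?thesis by simp
qed

lemma cf_prod: assumes "a < b" "b \<le> k" "g 1 = 1"
  shows "(\<Prod>p\<in>{b..k}. g (cf a p)) = (if b = Suc a then g s else 1)"
proof -
  have "(\<Prod>p\<in>{b..k}. g (cf a p)) = (\<Prod>p\<in>{b..k}. if p = Suc a then g s else 1)"
    using assms by (intro prod.cong) (auto simp: cf_def)
  also have "\<dots> = (if b = Suc a then g s else 1)" using assms by auto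
  finally show ?thesis .
qed

lemma K_Mel: assumes "a \<in> {1..l}" "a < b" "b \<le> k" "k \<le> l"
  shows "K a * Mel q E b k = (if b = Suc a then s else 1) *\<^sub>R (Mel q E b k * K a)"
proof -
  have "K a * Mel q E b k = (\<Prod>p\<in>{b..k}. cf a p) *\<^sub>R (Mel q E b k * K a)"
    by (rule Mel_comm_left) (use assms in \<open>auto intro!: KE\<close>)
  then show ?thesis using cf_prod[of a b k "\<lambda>x. x"] assms by simp
qed

lemma Ki_Mel: assumes "a \<in> {1..l}" "a < b" "b \<le> k" "k \<le> l"
  shows "Ki a * Mel q E b k = (if b = Suc a then inverse s else 1) *\<^sub>R (Mel q E b k * Ki a)"
proof -
  have "Ki a * Mel q E b k = (\<Prod>p\<in>{b..k}. inverse (cf a p)) *\<^sub>R (Mel q E b k * Ki a)"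
    by (rule Mel_comm_left) (use assms in \<open>auto intro!: KiE\<close>)
  then show ?thesis using cf_prod[of a b k inverse] assms by simp
qed

lemma E_Mel_far: assumes "a \<in> {1..l}" "Suc a < b" "b \<le> k" "k \<le> l"
  shows "E a * Mel q E b k = Mel q E b k * E a"
proof -
  have "E a * Mel q E b k = (\<Prod>p\<in>{b..k}. 1) *\<^sub>R (Mel q E b k * E a)"
    by (rule Mel_comm_left) (use assms in \<open>auto intro!: EEfar\<close>)
  then show ?thesis by simp
qed

lemma Kprod_E: assumes "j \<in> {1..l}" "j < a" "a \<le> b" "b \<le> l"
  shows "Kprod K a b * E j = (if a = Suc j then s else 1) *\<^sub>R (E j * Kprod K a b)"
proof -
  have "Kprod K a b * E j = (\<Prod>p\<in>{a..b}. cf j p) *\<^sub>R (E j * Kprod K a b)"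
    by (rule Kprod_comm_right) (use assms in \<open>auto intro!: KE simp: cf_sym\<close>)
  then show ?thesis using cf_prod[of j a b "\<lambda>x. x"] assms by simp
qed

lemma Kiprod_E: assumes "j \<in> {1..l}" "j < a" "a \<le> b" "b \<le> l"
  shows "Kprod Ki a b * E j = (if a = Suc j then inverse s else 1) *\<^sub>R (E j * Kprod Ki a b)"
proof -
  have "Kprod Ki a b * E j = (\<Prod>p\<in>{a..b}. inverse (cf j p)) *\<^sub>R (E j * Kprod Ki a b)"
    by (rule Kprod_comm_right) (use assms in \<open>auto intro!: KiE simp: cf_sym\<close>)
  then show ?thesis using cf_prod[of j a b inverse] assms by simp
qed

lemma comm_Kprod:
  assumes "\<forall>m\<in>{a..b}. x * f m = f m * x"
  shows "x * Kprod f a b = Kprod f a b * x"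
proof -
  have "x * Kprod f a b = (\<Prod>p\<in>{a..b}. 1) *\<^sub>R (Kprod f a b * x)"
    by (rule Kprod_comm_left) (use assms in auto)
  then show ?thesis by simp
qed

lemma K_Kprod: "j \<in> {1..l} \<Longrightarrow> 1 \<le> a \<Longrightarrow> b \<le> l \<Longrightarrow> K j * Kprod K a b = Kprod K a b * K j"
  by (rule comm_Kprod) (auto intro: KK)
lemma Ki_Kiprod: "j \<in> {1..l} \<Longrightarrow> 1 \<le> a \<Longrightarrow> b \<le> l \<Longrightarrow> Ki j * Kprod Ki a b = Kprod Ki a b * Ki j"
  by (rule comm_Kprod) (auto intro: KiKi)
lemma Ki_Kprod: "j \<in> {1..l} \<Longrightarrow> 1 \<le> a \<Longrightarrow> b \<le> l \<Longrightarrow> Ki j * Kprod K a b = Kprod K a b * Ki j"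
  by (rule comm_Kprod) (auto intro: KiKc)
lemma Khi_Kprod: "1 \<le> a \<Longrightarrow> b \<le> l \<Longrightarrow> Khi * Kprod K a b = Kprod K a b * Khi"
  by (rule comm_Kprod) (auto intro: KhiK)
lemma Khi_Kiprod: "1 \<le> a \<Longrightarrow> b \<le> l \<Longrightarrow> Khi * Kprod Ki a b = Kprod Ki a b * Khi"
  by (rule comm_Kprod) (auto intro: KhiKi)


lemma Kprod_inv: "1 \<le> a \<Longrightarrow> b \<le> l \<Longrightarrow> Kprod K a b * Kprod Ki a b = 1"
proof (induction "Suc b - a" arbitrary: a)
  case 0 then show ?case by (simp add: Kprod_empty)
next
  case (Suc d)
  then have ab: "a \<le> b" by simp
  have IH: "Kprod K (Suc a) b * Kprod Ki (Suc a) b = 1" using Suc by simp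
  have "Kprod K a b * Kprod Ki a b = K a * (Kprod K (Suc a) b * Ki a) * Kprod Ki (Suc a) b"
    by (simp add: Kprod_cons[OF ab] mult.assoc)
  also have "\<dots> = (K a * Ki a) * (Kprod K (Suc a) b * Kprod Ki (Suc a) b)"
  proof -
    have c: "Kprod K (Suc a) b * Ki a = Ki a * Kprod K (Suc a) b"
      using Ki_Kprod[of a "Suc a" b] Suc.prems ab by simp
    show ?thesis by (metis c mult.assoc)
  qed
  finally show ?case using IH KKi[of a] Suc.prems ab by simp
qed

lemma stKi: "i \<in> {1..l} \<Longrightarrow> st (Ki i) = Ki i"
proof -
  assume i: "i \<in> {1..l}"
  have "st (Ki i) * K i = 1" using st_mult[of "K i" "Ki i"] KKi[OF i] stK[OF i] st_one by simp
  then have "st (Ki i) = st (Ki i) * (K i * Ki i)" using KKi[OF i] by simp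
  also have "\<dots> = Ki i" using \<open>st (Ki i) * K i = 1\<close> by (simp add: mult.assoc[symmetric])
  finally show ?thesis .
qed

lemma st_Kprod_gen:
  assumes "\<forall>m\<in>{a..b}. st (f m) = f m" "\<forall>m\<in>{a..b}. \<forall>p\<in>{a..b}. f m * f p = f p * f m"
  shows "st (Kprod f a b) = Kprod f a b"
  using assms
proof (induction "Suc b - a" arbitrary: a)
  case 0 then show ?case by (simp add: Kprod_empty st_one)
next
  case (Suc d)
  then have ab: "a \<le> b" by simp
  have IH: "st (Kprod f (Suc a) b) = Kprod f (Suc a) b" using Suc by simp
  have c: "f a * Kprod f (Suc a) b = Kprod f (Suc a) b * f a"
    by (rule comm_Kprod) (use Suc.prems ab in auto)
  show ?case using IH c Suc.prems ab by (simp add: Kprod_cons[OF ab] st_mult)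
qed

lemma st_Kprod: "1 \<le> a \<Longrightarrow> b \<le> l \<Longrightarrow> st (Kprod K a b) = Kprod K a b"
  by (rule st_Kprod_gen) (auto intro: stK KK)
lemma st_Kiprod: "1 \<le> a \<Longrightarrow> b \<le> l \<Longrightarrow> st (Kprod Ki a b) = Kprod Ki a b"
  by (rule st_Kprod_gen) (auto intro: stKi KiKi)

lemma Dl_Kprod_gen:
  assumes "\<forall>m\<in>{a..b}. Dl (f m) = tens (f m) (f m)"
  shows "Dl (Kprod f a b) = tens (Kprod f a b) (Kprod f a b)"
  using assms
proof (induction "Suc b - a" arbitrary: a)
  case 0 then show ?case by (simp add: Kprod_empty Dl_one tens_one)
next
  case (Suc d)
  then have ab: "a \<le> b" by simp
  have IH: "Dl (Kprod f (Suc a) b) = tens (Kprod f (Suc a) b) (Kprod f (Suc a) b)" using Suc by simp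
  show ?case using IH Suc.prems ab by (simp add: Kprod_cons[OF ab] Dl_mult tens_mult)
qed

lemma Dl_Kprod: "1 \<le> a \<Longrightarrow> b \<le> l \<Longrightarrow> Dl (Kprod K a b) = tens (Kprod K a b) (Kprod K a b)"
  by (rule Dl_Kprod_gen) (auto intro: Dl_K)

lemma tens_diff1: "tens (a - b) c = tens a c - tens b c"
  using tens_add1[of "a - b" b c] by (simp add: algebra_simps)
lemma tens_diff2: "tens a (b - c) = tens a b - tens a c"
  using tens_add2[of a "b - c" c] by (simp add: algebra_simps)
lemma Dl_diff: "Dl (a - b) = Dl a - Dl b"
  using Dl_add[of "a - b" b] by (simp add: algebra_simps)
lemma Dl_qbr: "Dl (qbr q a b) = qbr q (Dl a) (Dl b)"
  by (simp add: qbr_def Dl_diff Dl_mult Dl_scale)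
lemma stT_zero: "stT 0 = 0"
  using stT_add[of 0 0] by simp
lemma stT_sum: "finite S \<Longrightarrow> stT (sum f S) = (\<Sum>x\<in>S. stT (f x))"
  by (induction S rule: finite_induct) (auto simp: stT_zero stT_add)


lemma s_id: "s - inverse q * inverse s = 0"
proof -
  have "inverse q * inverse s = s * s * inverse s" by (simp add: ss)
  also have "\<dots> = s" using s_pos by simp
  finally show ?thesis by simp
qed

lemma qbr_split: "qbr q (A + B) (P + R + c *\<^sub>R S) =
   qbr q A P + qbr q A R + c *\<^sub>R qbr q A S + qbr q B P + qbr q B R + c *\<^sub>R qbr q B S"
  by (simp add: qbr_def algebra_simps scaleR_right_diff_distrib)

lemma qbr_sum: "qbr q X (sum f S) = (\<Sum>m\<in>S. qbr q X (f m))"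
  by (simp add: qbr_def sum_distrib_left sum_distrib_right scaleR_sum_right sum_subtractf)

context
  fixes j k :: nat
  assumes j1: "1 \<le> j" and jk: "j < k" and kl: "k \<le> l"
begin

lemma jin: "j \<in> {1..l}" using j1 jk kl by simp

lemma pAP: "qbr q (tens (E j) (K j)) (tens (Mel q E (Suc j) k) (Kprod K (Suc j) k))
   = tens (Mel q E j k) (Kprod K j k)"
proof -
  have c: "Kprod K (Suc j) k * K j = K j * Kprod K (Suc j) k"
    using K_Kprod[OF jin, of "Suc j" k] kl by simp
  show ?thesis
    by (simp add: qbr_def tens_mult c Mel_rec[OF jk] Kprod_cons[of j k] jk less_imp_le
          tens_diff1 tens_scale1)
qed

lemma pBR: "qbr q (tens (Ki j) (E j)) (tens (Kprod Ki (Suc j) k) (Mel q E (Suc j) k))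
   = tens (Kprod Ki j k) (Mel q E j k)"
proof -
  have c: "Kprod Ki (Suc j) k * Ki j = Ki j * Kprod Ki (Suc j) k"
    using Ki_Kiprod[OF jin, of "Suc j" k] kl by simp
  show ?thesis
    by (simp add: qbr_def tens_mult c Mel_rec[OF jk] Kprod_cons[of j k] jk less_imp_le
          tens_diff2 tens_scale2)
qed

lemma pAR: "qbr q (tens (E j) (K j)) (tens (Kprod Ki (Suc j) k) (Mel q E (Suc j) k)) = 0"
proof -
  have 1: "K j * Mel q E (Suc j) k = s *\<^sub>R (Mel q E (Suc j) k * K j)"
    using K_Mel[OF jin, of "Suc j" k] jk kl by simp
  have 2: "Kprod Ki (Suc j) k * E j = inverse s *\<^sub>R (E j * Kprod Ki (Suc j) k)"
    using Kiprod_E[OF jin, of "Suc j" k] jk kl by simp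
  have "qbr q (tens (E j) (K j)) (tens (Kprod Ki (Suc j) k) (Mel q E (Suc j) k))
     = (s - inverse q * inverse s) *\<^sub>R tens (E j * Kprod Ki (Suc j) k) (Mel q E (Suc j) k * K j)"
    by (simp add: qbr_def tens_mult 1 2 tens_scale1 tens_scale2 scaleR_diff_left)
  then show ?thesis using s_id by simp
qed

lemma pBP: "qbr q (tens (Ki j) (E j)) (tens (Mel q E (Suc j) k) (Kprod K (Suc j) k))
   = (1 - inverse q * inverse q) *\<^sub>R tens (Kprod Ki j j * Mel q E (Suc j) k) (Mel q E j j * Kprod K (Suc j) k)"
proof -
  have 1: "Ki j * Mel q E (Suc j) k = inverse s *\<^sub>R (Mel q E (Suc j) k * Ki j)"
    using Ki_Mel[OF jin, of "Suc j" k] jk kl by simp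
  then have 1: "Mel q E (Suc j) k * Ki j = s *\<^sub>R (Ki j * Mel q E (Suc j) k)"
    using s_pos by simp
  have 2: "Kprod K (Suc j) k * E j = s *\<^sub>R (E j * Kprod K (Suc j) k)"
    using Kprod_E[OF jin, of "Suc j" k] jk kl by simp
  have "qbr q (tens (Ki j) (E j)) (tens (Mel q E (Suc j) k) (Kprod K (Suc j) k))
     = (1 - inverse q * (s * s)) *\<^sub>R tens (Ki j * Mel q E (Suc j) k) (E j * Kprod K (Suc j) k)"
    by (simp add: qbr_def tens_mult 1 2 tens_scale1 tens_scale2 scaleR_diff_left)
  then show ?thesis by (simp add: ss Kprod_single Mel_same)
qed

context
  fixes m :: nat
  assumes jm: "j < m" and mk: "m < k"
begin

lemma pAT: "qbr q (tens (E j) (K j))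
   (tens (Kprod Ki (Suc j) m * Mel q E (Suc m) k) (Mel q E (Suc j) m * Kprod K (Suc m) k)) = 0"
proof -
  have 1: "Kprod Ki (Suc j) m * E j = inverse s *\<^sub>R (E j * Kprod Ki (Suc j) m)"
    using Kiprod_E[OF jin, of "Suc j" m] jm mk kl by simp
  have 2: "Mel q E (Suc m) k * E j = E j * Mel q E (Suc m) k"
    using E_Mel_far[OF jin, of "Suc m" k] jm mk kl by simp
  have 3: "K j * Mel q E (Suc j) m = s *\<^sub>R (Mel q E (Suc j) m * K j)"
    using K_Mel[OF jin, of "Suc j" m] jm mk kl by simp
  have 4: "K j * Kprod K (Suc m) k = Kprod K (Suc m) k * K j"
    using K_Kprod[OF jin, of "Suc m" k] kl by simp
  have a: "Kprod Ki (Suc j) m * Mel q E (Suc m) k * E j = inverse s *\<^sub>R (E j * (Kprod Ki (Suc j) m * Mel q E (Suc m) k))"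
    by (simp add: mult.assoc 2) (simp add: mult.assoc[symmetric] 1)
  have b: "K j * (Mel q E (Suc j) m * Kprod K (Suc m) k) = s *\<^sub>R (Mel q E (Suc j) m * Kprod K (Suc m) k * K j)"
    by (simp add: mult.assoc[symmetric] 3) (simp add: mult.assoc 4)
  have "qbr q (tens (E j) (K j))
     (tens (Kprod Ki (Suc j) m * Mel q E (Suc m) k) (Mel q E (Suc j) m * Kprod K (Suc m) k))
    = (s - inverse q * inverse s) *\<^sub>R tens (E j * (Kprod Ki (Suc j) m * Mel q E (Suc m) k))
         (Mel q E (Suc j) m * Kprod K (Suc m) k * K j)"
    unfolding qbr_def tens_mult a b by (simp add: tens_scale1 tens_scale2 scaleR_diff_left)
  then show ?thesis using s_id by simp
qed

lemma pBT: "qbr q (tens (Ki j) (E j))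
   (tens (Kprod Ki (Suc j) m * Mel q E (Suc m) k) (Mel q E (Suc j) m * Kprod K (Suc m) k))
  = tens (Kprod Ki j m * Mel q E (Suc m) k) (Mel q E j m * Kprod K (Suc m) k)"
proof -
  have 1: "Kprod Ki (Suc j) m * Ki j = Ki j * Kprod Ki (Suc j) m"
    using Ki_Kiprod[OF jin, of "Suc j" m] jm mk kl by simp
  have 2: "Mel q E (Suc m) k * Ki j = Ki j * Mel q E (Suc m) k"
    using Ki_Mel[OF jin, of "Suc m" k] jm mk kl by simp
  have 3: "Kprod K (Suc m) k * E j = E j * Kprod K (Suc m) k"
    using Kprod_E[OF jin, of "Suc m" k] jm mk kl by simp
  have a: "Kprod Ki (Suc j) m * Mel q E (Suc m) k * Ki j = Ki j * (Kprod Ki (Suc j) m * Mel q E (Suc m) k)"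
    by (simp add: mult.assoc 2) (simp add: mult.assoc[symmetric] 1)
  have b: "Mel q E (Suc j) m * Kprod K (Suc m) k * E j = Mel q E (Suc j) m * E j * Kprod K (Suc m) k"
    by (simp add: mult.assoc 3)
  have c: "E j * (Mel q E (Suc j) m * Kprod K (Suc m) k) = E j * Mel q E (Suc j) m * Kprod K (Suc m) k"
    by (simp add: mult.assoc)
  show ?thesis
    unfolding qbr_def tens_mult a b c
    by (simp add: Mel_rec[OF jm] Kprod_cons[of j m] jm less_imp_le qbr_def tens_diff2 tens_scale2
      left_diff_distrib mult.assoc)
qed

end
end


lemma Dl_Mel:
  assumes "1 \<le> j" "j \<le> k" "k \<le> l"
  shows "Dl (Mel q E j k) = tens (Mel q E j k) (Kprod K j k) + tens (Kprod Ki j k) (Mel q E j k)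
    + (1 - inverse q * inverse q) *\<^sub>R
      (\<Sum>m=j..<k. tens (Kprod Ki j m * Mel q E (Suc m) k) (Mel q E j m * Kprod K (Suc m) k))"
  using assms
proof (induction "k - j" arbitrary: j)
  case 0
  then have "j = k" by simp
  then show ?case using 0 by (simp add: Mel_same Kprod_single Dl_E)
next
  case (Suc d j)
  then have jk: "j < k" and j1: "1 \<le> j" and kl: "k \<le> l" by auto
  define cM where "cM = 1 - inverse q * inverse q"
  define T where "T m = tens (Kprod Ki (Suc j) m * Mel q E (Suc m) k) (Mel q E (Suc j) m * Kprod K (Suc m) k)" for m
  define T' where "T' m = tens (Kprod Ki j m * Mel q E (Suc m) k) (Mel q E j m * Kprod K (Suc m) k)" for m
  have IH: "Dl (Mel q E (Suc j) k) = tens (Mel q E (Suc j) k) (Kprod K (Suc j) k)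
     + tens (Kprod Ki (Suc j) k) (Mel q E (Suc j) k) + cM *\<^sub>R (\<Sum>m=Suc j..<k. T m)"
    using Suc.hyps(1)[of "Suc j"] Suc.hyps(2) jk kl j1 unfolding cM_def T_def by simp
  have jin: "j \<in> {1..l}" using j1 jk kl by simp
  have A0: "qbr q (tens (E j) (K j)) (\<Sum>m=Suc j..<k. T m) = 0"
    unfolding qbr_sum T_def by (rule sum.neutral) (use pAT[of j k] j1 jk kl in auto)
  have B0: "qbr q (tens (Ki j) (E j)) (\<Sum>m=Suc j..<k. T m) = (\<Sum>m=Suc j..<k. T' m)"
    unfolding qbr_sum T_def T'_def by (rule sum.cong) (use pBT[of j k] j1 jk kl in auto)
  have "Dl (Mel q E j k) = qbr q (Dl (E j)) (Dl (Mel q E (Suc j) k))"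
    by (simp add: Mel_rec[OF jk] Dl_qbr)
  also have "\<dots> = tens (Mel q E j k) (Kprod K j k) + 0 + cM *\<^sub>R 0
     + cM *\<^sub>R T' j + tens (Kprod Ki j k) (Mel q E j k) + cM *\<^sub>R (\<Sum>m=Suc j..<k. T' m)"
    unfolding IH Dl_E[OF jin] qbr_split A0 B0
    using pAP[OF j1 jk kl] pAR[OF j1 jk kl] pBP[OF j1 jk kl] pBR[OF j1 jk kl]
    by (simp add: cM_def T'_def)
  also have "\<dots> = tens (Mel q E j k) (Kprod K j k) + tens (Kprod Ki j k) (Mel q E j k)
     + cM *\<^sub>R (\<Sum>m=j..<k. T' m)"
    using jk by (simp add: sum.atLeast_Suc_lessThan scaleR_right_distrib algebra_simps)
  finally show ?case unfolding cM_def T'_def .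
qed


lemma stMel_Kiprod: assumes "1 \<le> i" "i \<le> m" "m < l"
  shows "st (Mel q E (Suc m) l) * Kprod Ki i m = inverse s *\<^sub>R (Kprod Ki i m * st (Mel q E (Suc m) l))"
proof -
  have h: "\<forall>a\<in>{i..m}. st (Mel q E (Suc m) l) * Ki a
      = (if a = m then inverse s else 1) *\<^sub>R (Ki a * st (Mel q E (Suc m) l))"
  proof
    fix a assume a: "a \<in> {i..m}"
    then have ain: "a \<in> {1..l}" using assms by auto
    have "Ki a * Mel q E (Suc m) l = (if Suc m = Suc a then inverse s else 1) *\<^sub>R (Mel q E (Suc m) l * Ki a)"
      using Ki_Mel[OF ain, of "Suc m" l] a assms by simp
    then have "st (Ki a * Mel q E (Suc m) l) = st ((if a = m then inverse s else 1) *\<^sub>R (Mel q E (Suc m) l * Ki a))"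
      by simp
    then show "st (Mel q E (Suc m) l) * Ki a = (if a = m then inverse s else 1) *\<^sub>R (Ki a * st (Mel q E (Suc m) l))"
      by (simp only: st_mult st_scale stKi[OF ain])
  qed
  have "st (Mel q E (Suc m) l) * Kprod Ki i m = (\<Prod>a\<in>{i..m}. if a = m then inverse s else 1) *\<^sub>R (Kprod Ki i m * st (Mel q E (Suc m) l))"
    by (rule Kprod_comm_left[OF h])
  then show ?thesis using assms by simp
qed

lemma scal_id: "(1 - inverse q * inverse q) * inverse s = s * (q - inverse q)"
proof -
  have g: "(1 - (t*t)*(t*t)) * inverse t = t * (inverse (t*t) - t*t)" if "t > 0" for t :: real
    using that by (simp add: field_simps)
  have q: "q = inverse (s * s)" using ss q0 by simp
  have "(1 - inverse q * inverse q) * inverse s = (1 - (s*s)*(s*s)) * inverse s" by (simp only: ss)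
  also have "\<dots> = s * (inverse (s*s) - s*s)" by (rule g[OF s_pos])
  also have "\<dots> = s * (q - inverse q)" by (simp only: ss) simp
  finally show ?thesis .
qed

lemma main:
  assumes "1 \<le> i" "i \<le> l"
  shows "Dl (Xel l q K E Khi st i) =
           tens (Xel l q K E Khi st i) (Nel l K Khi i (i - 1))
         + tens Khi (Xel l q K E Khi st i)
         + scaleR (q powr (-1/2) * (q - inverse q))
             (\<Sum>j = i..l - 1. tens (Xel l q K E Khi st (j + 1)) (Nel l K Khi i j * st (Mel q E i j)))"
proof -
  define cM where "cM = 1 - inverse q * inverse q"
  define \<kappa> where "\<kappa> = Kprod K i l"
  define N where "N = \<kappa> * Khi"
  have Nil: "Nel l K Khi a l = Kprod K a l * Khi" for a by (simp add: Nel_def Kprod_empty)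
  have X: "Xel l q K E Khi st a = Kprod K a l * Khi * st (Mel q E a l)" for a
    by (simp add: Xel_def Nil)
  have DN: "Dl N = tens N N" unfolding N_def \<kappa>_def
    using assms by (simp add: Dl_mult Dl_Kprod Dl_Khi tens_mult)
  have stD: "stT (Dl (Mel q E i l)) = tens (st (Mel q E i l)) \<kappa> + tens (Kprod Ki i l) (st (Mel q E i l))
     + cM *\<^sub>R (\<Sum>m=i..<l. tens (st (Mel q E (Suc m) l) * Kprod Ki i m) (Kprod K (Suc m) l * st (Mel q E i m)))"
  proof -
    have e: "Dl (Mel q E i l) = tens (Mel q E i l) (Kprod K i l) + tens (Kprod Ki i l) (Mel q E i l)
    + cM *\<^sub>R (\<Sum>m=i..<l. tens (Kprod Ki i m * Mel q E (Suc m) l) (Mel q E i m * Kprod K (Suc m) l))"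
      using Dl_Mel[OF assms(1) assms(2) order_refl] unfolding cM_def .
    show ?thesis unfolding e \<kappa>_def
      using assms by (simp add: stT_add stT_scale stT_sum stT_tens st_mult st_Kprod st_Kiprod)
  qed
  have T1: "N * \<kappa> = Kprod K i l * Kprod K (Suc (i - 1)) l * Khi"
    using assms Khi_Kprod[of i l] by (simp add: N_def \<kappa>_def mult.assoc)
  have T2: "N * Kprod Ki i l = Khi"
  proof -
    have "N * Kprod Ki i l = \<kappa> * (Kprod Ki i l * Khi)"
      using assms Khi_Kiprod[of i l] by (simp add: N_def mult.assoc)
    also have "\<dots> = Khi" using Kprod_inv[of i l] assms by (simp add: \<kappa>_def mult.assoc[symmetric])
    finally show ?thesis .
  qed
  have T3: "tens N N * tens (st (Mel q E (Suc m) l) * Kprod Ki i m) (Kprod K (Suc m) l * st (Mel q E i m))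
      = inverse s *\<^sub>R tens (Xel l q K E Khi st (Suc m)) (Nel l K Khi i m * st (Mel q E i m))"
    if m: "m \<in> {i..<l}" for m
  proof -
    have im: "i \<le> m" "m < l" using m by auto
    have sp: "\<kappa> = Kprod K i m * Kprod K (Suc m) l" unfolding \<kappa>_def
      by (rule Kprod_split) (use im in auto)
    have c1: "Kprod K (Suc m) l * Kprod Ki i m = Kprod Ki i m * Kprod K (Suc m) l"
      by (rule comm_Kprod[where x="Kprod K (Suc m) l" and f=Ki]) (use im assms Ki_Kprod in auto)
    have inv: "Kprod K i m * Kprod Ki i m = 1" using Kprod_inv[of i m] im assms by simp
    have L: "N * (st (Mel q E (Suc m) l) * Kprod Ki i m) = inverse s *\<^sub>R (Kprod K (Suc m) l * Khi * st (Mel q E (Suc m) l))"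
    proof -
      have e1: "\<kappa> * Kprod Ki i m = Kprod K (Suc m) l"
        unfolding sp by (simp add: mult.assoc c1) (simp add: mult.assoc[symmetric] inv)
      have e2: "\<kappa> * Khi * Kprod Ki i m = Kprod K (Suc m) l * Khi"
        using Khi_Kiprod[of i m] im assms by (simp add: mult.assoc e1[symmetric])
      have "N * (st (Mel q E (Suc m) l) * Kprod Ki i m) = inverse s *\<^sub>R (\<kappa> * Khi * Kprod Ki i m * st (Mel q E (Suc m) l))"
        using stMel_Kiprod[of i m] im assms by (simp add: N_def mult.assoc)
      also have "\<dots> = inverse s *\<^sub>R (Kprod K (Suc m) l * Khi * st (Mel q E (Suc m) l))"
        by (simp only: e2)
      finally show ?thesis .
    qed
    have R: "N * (Kprod K (Suc m) l * st (Mel q E i m)) = Nel l K Khi i m * st (Mel q E i m)"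
    proof -
      have c: "Khi * (Kprod K (Suc m) l * x) = Kprod K (Suc m) l * (Khi * x)" for x
        using Khi_Kprod[of "Suc m" l] im assms by (simp add: mult.assoc[symmetric])
      show ?thesis by (simp add: N_def Nel_def \<kappa>_def mult.assoc c)
    qed
    show ?thesis unfolding tens_mult L R X by (simp add: tens_scale1 Nil)
  qed
  have "Dl (Xel l q K E Khi st i) = tens N N * stT (Dl (Mel q E i l))"
  proof -
    have "Xel l q K E Khi st i = N * st (Mel q E i l)" by (simp add: X N_def \<kappa>_def)
    then show ?thesis by (simp only: Dl_mult Dl_st DN)
  qed
  also have "\<dots> = tens (Xel l q K E Khi st i) (Nel l K Khi i (i - 1)) + tens Khi (Xel l q K E Khi st i)
     + cM *\<^sub>R (\<Sum>m=i..<l. inverse s *\<^sub>R tens (Xel l q K E Khi st (Suc m)) (Nel l K Khi i m * st (Mel q E i m)))"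
    unfolding stD using T1 T2 T3
    by (simp add: distrib_left tens_mult sum_distrib_left scaleR_sum_right X N_def Nel_def \<kappa>_def mult.assoc)
  also have "\<dots> = tens (Xel l q K E Khi st i) (Nel l K Khi i (i - 1)) + tens Khi (Xel l q K E Khi st i)
     + (cM * inverse s) *\<^sub>R (\<Sum>m=i..<l. tens (Xel l q K E Khi st (Suc m)) (Nel l K Khi i m * st (Mel q E i m)))"
    by (simp add: scaleR_sum_right)
  also have "{i..<l} = {i..l - 1}" using assms by auto
  finally show ?thesis unfolding cM_def scal_id by (simp add: s_def)
qed

end

theorem lemma3p15:
  fixes l :: nat and q :: real
    and K Ki E :: "nat \<Rightarrow> 'a::real_algebra_1" and Kh Khi :: 'a and st :: "'a \<Rightarrow> 'a"
    and tens :: "'a \<Rightarrow> 'a \<Rightarrow> 't::real_algebra_1" and stT :: "'t \<Rightarrow> 't" and Dl :: "'a \<Rightarrow> 't"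
  assumes "0 < q" and "q < 1" and "1 \<le> l"
    and "uq_data l q K Ki E Kh Khi st tens stT Dl"
    and "1 \<le> i" and "i \<le> l"
  shows "Dl (Xel l q K E Khi st i) =
           tens (Xel l q K E Khi st i) (Nel l K Khi i (i - 1))
         + tens Khi (Xel l q K E Khi st i)
         + scaleR (q powr (-1/2) * (q - inverse q))
             (\<Sum>j = i..l - 1. tens (Xel l q K E Khi st (j + 1)) (Nel l K Khi i j * st (Mel q E i j)))"
proof -
  interpret uqd l q K Ki E Kh Khi st tens stT Dl
    using assms(1,4) by unfold_locales
  show ?thesis by (rule main[OF assms(5,6)])
qed

end
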